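(* Let $(S,V)$ be a complete semiring-semimodule pair, let $n\ge1$, let $\Gamma$ be an alphabet, and let $M\in (S^{n\times n})^{\Gamma^*\times\Gamma^*}$ be a pushdown transition matrix. Then for all $p\in\Gamma$, $$(M^\omega)_p=\sum_{p'\in\Gamma}(A_M)_{p,p'}\,(M^\omega)_{p'}.$$
   Context: A complete semiring-semimodule pair $(S,V)$ (in the sense of Ésik and Kuich, "Modern Automata Theory") consists of a complete starsemiring $S$ (arbitrary sums with infinite associativity/commutativity/distributivity laws, star $s^*=\sum_{j\ge0}s^j$) and a complete $S$-semimodule $V$, with infinite products $\prod_{j\ge1}s_j\in V$ of sequences in $S$ satisfying the axioms of that framework. $M\in (S^{n\times n})^{\Gamma^*\times\Gamma^*}$ (a $\Gamma^*\times\Gamma^*$ matrix with $n\times n$ blocks over $S$) is a pushdown transition matrix if (i) for each $p\in\Gamma$ only finitely many blocks $M_{p,\pi}$ are nonzero, and (ii) $M_{\pi_1,\pi_2}=M_{p,\pi}$ if $\pi_1=p\pi'$, $\pi_2=\pi\pi'$ for some $p\in\Gamma$, $\pi,\pi'\in\Gamma^*$, and $0$ otherwise. $M^*=\sum_{m\ge0}M^m$ with blocks $(M^* )_{\pi,\pi'}$. $M^\omega\in (V^n)^{\Gamma^*}$ is given by $((M^\omega)_\pi)_i=\sum_{\pi_1,\pi_2,\ldots\in\Gamma^*}\sum_{j_1,j_2,\ldots\in\{1,\dots,n\}}(M_{\pi,\pi_1})_{i,j_1}(M_{\pi_1,\pi_2})_{j_1,j_2}\cdots$. For $p,p'\in\Gamma$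 the matrix $(A_M)_{p,p'}\in S^{n\times n}$ is $$(A_M)_{p,p'}=\sum_{\substack{\pi=p_1\dots p_k\in\Gamma^+,\ 1\le j\le k\\ p_j=p'}}M_{p,\pi}\,(M^* )_{p_1,\epsilon}\cdots(M^* )_{p_{j-1},\epsilon}.$$ *)

theory Defs
  imports Main "HOL-Library.Countable"
begin

(* Universe of indices for complete sums: U = nat => nat (cardinality of the continuum).
   Every index set used in the statement is encoded injectively into U. *)
type_synonym idx = "nat \<Rightarrow> nat"

definition seq_encode :: "(nat \<Rightarrow> idx) \<Rightarrow> idx" where
  "seq_encode \<sigma> = (\<lambda>k. case prod_decode k of (a, b) \<Rightarrow> \<sigma> a b)"

definition seq_decode :: "idx \<Rightarrow> nat \<Rightarrow> idx" where
  "seq_decode u = (\<lambda>a b. u (prod_encode (a, b)))"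

(* Complete semiring-semimodule pair (Esik-Kuich), with sums over families indexed by
   subsets of the index universe idx.
   ssum f I = sum_{i in I} f i in S,  vsum f I = sum_{i in I} f i in V,
   smult = scalar action S x V -> V,  iprod s = prod_{j>=1} s_j (s_j = s (j-1)). *)
locale cssp =
  fixes ssum :: "(idx \<Rightarrow> 's::semiring_1) \<Rightarrow> idx set \<Rightarrow> 's"
    and vsum :: "(idx \<Rightarrow> 'v::comm_monoid_add) \<Rightarrow> idx set \<Rightarrow> 'v"
    and smult :: "'s \<Rightarrow> 'v \<Rightarrow> 'v"
    and iprod :: "(nat \<Rightarrow> 's) \<Rightarrow> 'v"
  assumes ssum_cong: "(\<And>i. i \<in> I \<Longrightarrow> f i = f' i) \<Longrightarrow> ssum f I = ssum f' I"
    and ssum_empty: "ssum f {} = 0"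
    and ssum_single: "ssum f {i} = f i"
    and ssum_pair: "i \<noteq> k \<Longrightarrow> ssum f {i, k} = f i + f k"
    and ssum_partition:
      "(\<And>j j'. j \<in> J \<Longrightarrow> j' \<in> J \<Longrightarrow> j \<noteq> j' \<Longrightarrow> P j \<inter> P j' = {})
       \<Longrightarrow> ssum f (\<Union>j\<in>J. P j) = ssum (\<lambda>j. ssum f (P j)) J"
    and ssum_distl: "ssum (\<lambda>i. a * f i) I = a * ssum f I"
    and ssum_distr: "ssum (\<lambda>i. f i * a) I = ssum f I * a"
    and vsum_cong: "(\<And>i. i \<in> I \<Longrightarrow> g i = h i) \<Longrightarrow> vsum g I = vsum h I"
    and vsum_empty: "vsum g {} = 0"
    and vsum_single: "vsum g {i} = g i"
    and vsum_pair: "i \<noteq> k \<Longrightarrow> vsum g {i, k} = g i + g k"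
    and vsum_partition:
      "(\<And>j j'. j \<in> J \<Longrightarrow> j' \<in> J \<Longrightarrow> j \<noteq> j' \<Longrightarrow> P j \<inter> P j' = {})
       \<Longrightarrow> vsum g (\<Union>j\<in>J. P j) = vsum (\<lambda>j. vsum g (P j)) J"
    and smult_add_left: "smult (a + b) v = smult a v + smult b v"
    and smult_add_right: "smult a (v + w) = smult a v + smult a w"
    and smult_mult: "smult (a * b) v = smult a (smult b v)"
    and smult_one: "smult 1 v = v"
    and smult_zero_left: "smult 0 v = 0"
    and smult_zero_right: "smult a 0 = 0"
    and vsum_smult_left: "vsum (\<lambda>i. smult (f i) v) I = smult (ssum f I) v"
    and vsum_smult_right: "vsum (\<lambda>i. smult a (g i)) I = smult a (vsum g I)"
    and iprod_first: "iprod s = smult (s 0) (iprod (\<lambda>j. s (Suc j)))"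
    and iprod_group: "strict_mono n \<Longrightarrow> n 0 = 0 \<Longrightarrow>
       iprod s = iprod (\<lambda>j. prod_list (map s [n j..<n (Suc j)]))"
    and iprod_distrib:
      "iprod (\<lambda>j. ssum (F j) (Is j)) =
       vsum (\<lambda>u. iprod (\<lambda>j. F j (seq_decode u j))) (seq_encode ` {\<sigma>. \<forall>j. \<sigma> j \<in> Is j})"

definition csum :: "((idx \<Rightarrow> 's) \<Rightarrow> idx set \<Rightarrow> 's) \<Rightarrow> ('j::countable \<Rightarrow> 's) \<Rightarrow> 'j set \<Rightarrow> 's" where
  "csum ssum f J = ssum (\<lambda>u. f (from_nat (u 0))) ((\<lambda>x (_::nat). to_nat x) ` J)"

definition vsum_seq :: "((idx \<Rightarrow> 'v) \<Rightarrow> idx set \<Rightarrow> 'v) \<Rightarrow> ((nat \<Rightarrow> 'j::countable) \<Rightarrow> 'v)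
    \<Rightarrow> (nat \<Rightarrow> 'j) set \<Rightarrow> 'v" where
  "vsum_seq vsum f X = vsum (\<lambda>u. f (from_nat \<circ> u)) ((\<lambda>x. to_nat \<circ> x) ` X)"

(* blocks: n x n matrices over S, with n = CARD('n) *)
type_synonym ('n, 's) block = "'n \<Rightarrow> 'n \<Rightarrow> 's"

definition zero_block :: "('n, 's::zero) block" where
  "zero_block = (\<lambda>_ _. 0)"

definition one_block :: "('n, 's::{zero,one}) block" where
  "one_block = (\<lambda>i j. if i = j then 1 else 0)"

definition block_mult :: "('n::finite, 's::semiring_1) block \<Rightarrow> ('n, 's) block \<Rightarrow> ('n, 's) block" where
  "block_mult A B = (\<lambda>i j. \<Sum>k\<in>UNIV. A i k * B k j)"

fun block_prod :: "('n::finite, 's::semiring_1) block list \<Rightarrow> ('n, 's) block" where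
  "block_prod [] = one_block"
| "block_prod (A # As) = block_mult A (block_prod As)"

(* pushdown transition matrix M : Gamma* x Gamma* -> S^{n x n};  M [p] pi is M_{p,pi} *)
definition pushdown_transition_matrix :: "('a list \<Rightarrow> 'a list \<Rightarrow> ('n, 's::zero) block) \<Rightarrow> bool" where
  "pushdown_transition_matrix M \<longleftrightarrow>
     (\<forall>p. finite {\<pi>. M [p] \<pi> \<noteq> zero_block}) \<and>
     (\<forall>p \<pi> \<pi>'. M (p # \<pi>') (\<pi> @ \<pi>') = M [p] \<pi>) \<and>
     (\<forall>\<pi>1 \<pi>2. \<not> (\<exists>p \<pi> \<pi>'. \<pi>1 = p # \<pi>' \<and> \<pi>2 = \<pi> @ \<pi>') \<longrightarrow> M \<pi>1 \<pi>2 = zero_block)"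

fun mpow :: "((idx \<Rightarrow> 's) \<Rightarrow> idx set \<Rightarrow> 's) \<Rightarrow> nat \<Rightarrow> ('a::countable list \<Rightarrow> 'a list \<Rightarrow> ('n::countable, 's::semiring_1) block)
    \<Rightarrow> 'a list \<Rightarrow> 'a list \<Rightarrow> ('n, 's) block" where
  "mpow ssum 0 M \<pi> \<pi>' = (if \<pi> = \<pi>' then one_block else zero_block)"
| "mpow ssum (Suc m) M \<pi> \<pi>' =
     (\<lambda>i j. csum ssum (\<lambda>(\<rho>, k). M \<pi> \<rho> i k * mpow ssum m M \<rho> \<pi>' k j) UNIV)"

definition mstar :: "((idx \<Rightarrow> 's) \<Rightarrow> idx set \<Rightarrow> 's) \<Rightarrow> ('a::countable list \<Rightarrow> 'a list \<Rightarrow> ('n::countable, 's::semiring_1) block)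
    \<Rightarrow> 'a list \<Rightarrow> 'a list \<Rightarrow> ('n, 's) block" where
  "mstar ssum M \<pi> \<pi>' = (\<lambda>i j. csum ssum (\<lambda>m. mpow ssum m M \<pi> \<pi>' i j) UNIV)"

(* (A_M)_{p,p'} = sum over pi = p_1..p_k in Gamma^+ and 1 <= j <= k with p_j = p' of
   M_{p,pi} (M^* )_{p_1,eps} ... (M^* )_{p_{j-1},eps}.
   Here j is 0-based: pi ! j = p' and the prefix p_1..p_{j-1} is take j pi. *)
definition A_M :: "((idx \<Rightarrow> 's) \<Rightarrow> idx set \<Rightarrow> 's) \<Rightarrow> ('a::countable list \<Rightarrow> 'a list \<Rightarrow> ('n::finite, 's::semiring_1) block)
    \<Rightarrow> 'a \<Rightarrow> 'a \<Rightarrow> ('n, 's) block" where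
  "A_M ssum M p p' = (\<lambda>i i'. csum ssum
     (\<lambda>(\<pi>, j). block_prod (M [p] \<pi> # map (\<lambda>q. mstar ssum M [q] []) (take j \<pi>)) i i')
     {(\<pi>, j). \<pi> \<noteq> [] \<and> j < length \<pi> \<and> \<pi> ! j = p'})"

(* ((M^omega)_pi)_i = sum over all sequences (pi_1,j_1),(pi_2,j_2),... of
   (M_{pi,pi_1})_{i,j_1} (M_{pi_1,pi_2})_{j_1,j_2} ...   (x k = (pi_{k+1}, j_{k+1})) *)
definition Momega :: "((idx \<Rightarrow> 'v) \<Rightarrow> idx set \<Rightarrow> 'v) \<Rightarrow> ((nat \<Rightarrow> 's) \<Rightarrow> 'v)
    \<Rightarrow> ('a::countable list \<Rightarrow> 'a list \<Rightarrow> ('n::countable, 's) block) \<Rightarrow> 'a list \<Rightarrow> 'n \<Rightarrow> 'v" where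
  "Momega vsum iprod M \<pi> i = vsum_seq vsum
     (\<lambda>x. iprod (\<lambda>k. case (if k = 0 then (\<pi>, i) else x (k - 1)) of (\<rho>, a) \<Rightarrow>
                       (case x k of (\<sigma>, b) \<Rightarrow> M \<rho> \<sigma> a b)))
     UNIV"

end

theory Submission
  imports Defs
begin

class idxable = assumes ex_inj_idx: "\<exists>e::'a \<Rightarrow> idx. inj e"

lemma countable_inj_idx: "\<exists>e::'a::countable \<Rightarrow> idx. inj e"
proof
  show "inj (\<lambda>x::'a. \<lambda>_::nat. to_nat x)"
    by (rule injI) (metis from_nat_to_nat)
qed

context countable begin
subclass idxable
proof
  obtain f :: "'a \<Rightarrow> nat" where f: "inj f" using ex_inj by blast
  have "inj (\<lambda>x::'a. \<lambda>_::nat. f x)"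
    by (rule injI) (metis f fun_cong injD)
  then show "\<exists>e::'a \<Rightarrow> idx. inj e" by blast
qed
end

lemma seq_decode_encode[simp]: "seq_decode (seq_encode \<sigma>) = \<sigma>"
  by (auto simp: seq_decode_def seq_encode_def fun_eq_iff)

definition enc :: "'a::idxable \<Rightarrow> idx" where "enc = (SOME e. inj e)"

lemma inj_enc: "inj enc"
  unfolding enc_def by (rule someI_ex[OF ex_inj_idx])

lemma enc_eq_iff[simp]: "enc x = enc y \<longleftrightarrow> x = y"
  using inj_enc by (auto simp: inj_def)

lemma inv_enc[simp]: "inv enc (enc x) = x"
  by (rule inv_f_f[OF inj_enc])

instance "fun" :: (countable, idxable) idxable
proof
  have "inj (\<lambda>f::'a\<Rightarrow>'b. seq_encode (\<lambda>a. enc (f (from_nat a))))"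
  proof (rule injI)
    fix f g :: "'a \<Rightarrow> 'b"
    assume "seq_encode (\<lambda>a. enc (f (from_nat a))) = seq_encode (\<lambda>a. enc (g (from_nat a)))"
    then have fg: "(\<lambda>a. enc (f (from_nat a))) = (\<lambda>a. enc (g (from_nat a)))" by (metis seq_decode_encode)
    have "enc (f x) = enc (g x)" for x
      using fun_cong[OF fg, of "to_nat x"] by simp
    then show "f = g" by auto
  qed
  then show "\<exists>e::('a\<Rightarrow>'b) \<Rightarrow> idx. inj e" by blast
qed

instance prod :: (idxable, idxable) idxable
proof
  have "inj (\<lambda>(x::'a, y::'b). seq_encode (\<lambda>a. if a = 0 then enc x else enc y))"
  proof (rule injI, clarsimp)
    fix x x' :: 'a and y y' :: 'b
    assume "seq_encode (\<lambda>a. if a = 0 then enc (x::'a) else enc (y::'b)) = seq_encode (\<lambda>a. if a = 0 then enc x' else enc y')"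
    then have "(\<lambda>a::nat. if a = 0 then enc x else enc y) = (\<lambda>a. if a = 0 then enc x' else enc y')" by (metis seq_decode_encode)
    from fun_cong[OF this, of 0] fun_cong[OF this, of 1] show "x = x' \<and> y = y'" by simp
  qed
  then show "\<exists>e::('a\<times>'b) \<Rightarrow> idx. inj e" by blast
qed

locale sumop =
  fixes sm :: "(idx \<Rightarrow> 'b::comm_monoid_add) \<Rightarrow> idx set \<Rightarrow> 'b"
  assumes sm_cong: "(\<And>i. i \<in> I \<Longrightarrow> f i = f' i) \<Longrightarrow> sm f I = sm f' I"
    and sm_empty: "sm f {} = 0"
    and sm_single: "sm f {i} = f i"
    and sm_pair: "i \<noteq> k \<Longrightarrow> sm f {i, k} = f i + f k"
    and sm_partition:
      "(\<And>j j'. j \<in> J \<Longrightarrow> j' \<in> J \<Longrightarrow> j \<noteq> j' \<Longrightarrow> P j \<inter> P j' = {})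
       \<Longrightarrow> sm f (\<Union>j\<in>J. P j) = sm (\<lambda>j. sm f (P j)) J"
begin

definition Sum :: "('x::idxable \<Rightarrow> 'b) \<Rightarrow> 'x set \<Rightarrow> 'b" where
  "Sum g X = sm (\<lambda>u. g (inv enc u)) (enc ` X)"

lemma codec2:
  assumes "inj_on e1 X" "\<And>x. x \<in> X \<Longrightarrow> d1 (e1 x) = x"
    "inj_on e2 X" "\<And>x. x \<in> X \<Longrightarrow> d2 (e2 x) = x"
  shows "sm (\<lambda>u. g (d1 u)) (e1 ` X) = sm (\<lambda>u. g (d2 u)) (e2 ` X)"
proof -
  let ?G = "\<lambda>u. g (d2 u)"
  have eq: "e2 ` X = (\<Union>u\<in>e1 ` X. {e2 (d1 u)})"
    using assms(2) by force
  have "sm ?G (\<Union>u\<in>e1 ` X. {e2 (d1 u)}) = sm (\<lambda>u. sm ?G {e2 (d1 u)}) (e1 ` X)"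
  proof (rule sm_partition)
    fix j j' assume "j \<in> e1 ` X" "j' \<in> e1 ` X" "j \<noteq> j'"
    then show "{e2 (d1 j)} \<inter> {e2 (d1 j')} = {}"
      using assms by (auto simp: inj_on_def)
  qed
  also have "\<dots> = sm (\<lambda>u. g (d1 u)) (e1 ` X)"
    by (rule sm_cong) (use assms in \<open>auto simp: sm_single\<close>)
  finally show ?thesis using eq by simp
qed

lemma Sum_codec:
  assumes "inj_on e X" "\<And>x. x \<in> X \<Longrightarrow> d (e x) = x"
  shows "sm (\<lambda>u. g (d u)) (e ` X) = Sum g X"
  unfolding Sum_def
  by (rule codec2[OF assms]) (auto intro: inj_on_subset[OF inj_enc])

lemma Sum_reindex:
  assumes "bij_betw h X Y"
  shows "Sum g Y = Sum (g \<circ> h) X"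
proof -
  have b: "bij_betw (inv_into X h) Y X" using assms by (rule bij_betw_inv_into)
  have "Sum g Y = sm (\<lambda>u. g ((h \<circ> inv enc) u)) ((enc \<circ> inv_into X h) ` Y)"
  proof (rule Sum_codec[symmetric])
    show "inj_on (enc \<circ> inv_into X h) Y"
      using b inj_enc by (auto simp: bij_betw_def inj_on_def)
    fix y assume "y \<in> Y"
    then show "(h \<circ> inv enc) ((enc \<circ> inv_into X h) y) = y"
      using assms by (auto simp: bij_betw_def f_inv_into_f)
  qed
  also have "(enc \<circ> inv_into X h) ` Y = enc ` X"
    by (simp only: image_comp[symmetric]) (use b in \<open>simp add: bij_betw_def\<close>)
  finally show ?thesis by (simp add: Sum_def)
qed

lemma Sum_cong: "(\<And>x. x \<in> X \<Longrightarrow> f x = g x) \<Longrightarrow> Sum f X = Sum g X"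
  unfolding Sum_def by (rule sm_cong) auto

lemma Sum_empty[simp]: "Sum g {} = 0"
  by (simp add: Sum_def sm_empty)

lemma Sum_single[simp]: "Sum g {x} = g x"
  by (simp add: Sum_def sm_single)

lemma Sum_pair: "x \<noteq> y \<Longrightarrow> Sum g {x, y} = g x + g y"
  by (simp add: Sum_def sm_pair)

lemma Sum_partition:
  assumes "\<And>j j'. j \<in> J \<Longrightarrow> j' \<in> J \<Longrightarrow> j \<noteq> j' \<Longrightarrow> P j \<inter> P j' = {}"
  shows "Sum g (\<Union>j\<in>J. P j) = Sum (\<lambda>j. Sum g (P j)) J"
proof -
  have eq: "enc ` (\<Union>j\<in>J. P j) = (\<Union>v\<in>enc ` J. enc ` P (inv enc v))" by auto
  have "sm (\<lambda>u. g (inv enc u)) (\<Union>v\<in>enc ` J. enc ` P (inv enc v))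
     = sm (\<lambda>v. sm (\<lambda>u. g (inv enc u)) (enc ` P (inv enc v))) (enc ` J)"
  proof (rule sm_partition)
    fix j j' assume "j \<in> enc ` J" "j' \<in> enc ` J" "j \<noteq> j'"
    then obtain a a' where a: "a \<in> J" "a' \<in> J" "j = enc a" "j' = enc a'" "a \<noteq> a'" by auto
    then have "P a \<inter> P a' = {}" using assms by blast
    then have "enc ` P a \<inter> enc ` P a' = {}" by (metis image_Int inj_enc image_empty)
    then show "enc ` P (inv enc j) \<inter> enc ` P (inv enc j') = {}" using a by simp
  qed
  then show ?thesis by (simp add: Sum_def eq)
qed

lemma Sum_zero: "Sum (\<lambda>_. 0) X = 0"
proof -
  show ?thesis using Sum_partition[of X "\<lambda>_. {}" "\<lambda>_. 0"] by simp
qed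

lemma Sum_zero': "(\<And>x. x \<in> X \<Longrightarrow> g x = 0) \<Longrightarrow> Sum g X = 0"
  using Sum_cong[of X g "\<lambda>_. 0"] Sum_zero by simp

lemma Sum_Un:
  assumes "A \<inter> B = {}"
  shows "Sum g (A \<union> B) = Sum g A + Sum g B"
proof -
  have e: "A \<union> B = (\<Union>b\<in>{True, False}. if b then A else B)" by auto
  have "Sum g (\<Union>b\<in>{True, False}. if b then A else B) = Sum (\<lambda>b. Sum g (if b then A else B)) {True, False}"
    by (rule Sum_partition) (use assms in auto)
  then show ?thesis by (simp add: Sum_pair e)
qed

lemma Sum_insert: "x \<notin> X \<Longrightarrow> Sum g (insert x X) = g x + Sum g X"
  using Sum_Un[of "{x}" X g] by simp

lemma Sum_finite: "finite X \<Longrightarrow> Sum g X = sum g X"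
  by (induction X rule: finite_induct) (auto simp: Sum_insert)

lemma Sum_restrict:
  assumes "\<And>x. x \<in> X \<Longrightarrow> x \<notin> F \<Longrightarrow> g x = 0"
  shows "Sum g X = Sum g (X \<inter> F)"
proof -
  have "X = (X \<inter> F) \<union> (X - F)" by auto
  then have "Sum g X = Sum g (X \<inter> F) + Sum g (X - F)"
    by (metis Diff_disjoint Int_Diff Sum_Un inf_commute)
  moreover have "Sum g (X - F) = 0" by (rule Sum_zero') (use assms in auto)
  ultimately show ?thesis by simp
qed

lemma Sum_fin_support:
  assumes "finite F" "\<And>x. x \<in> X \<Longrightarrow> x \<notin> F \<Longrightarrow> g x = 0"
  shows "Sum g X = sum g (X \<inter> F)"
proof -
  have "Sum g X = Sum g (X \<inter> F)" by (rule Sum_restrict) (use assms in auto)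
  also have "\<dots> = sum g (X \<inter> F)" by (rule Sum_finite) (use assms in auto)
  finally show ?thesis .
qed

lemma Sum_Sigma:
  "Sum g (SIGMA a:A. B a) = Sum (\<lambda>a. Sum (\<lambda>b. g (a, b)) (B a)) A"
proof -
  have "(SIGMA a:A. B a) = (\<Union>a\<in>A. Pair a ` B a)" by auto
  then have "Sum g (SIGMA a:A. B a) = Sum g (\<Union>a\<in>A. Pair a ` B a)" by simp
  also have "\<dots> = Sum (\<lambda>a. Sum g (Pair a ` B a)) A"
    by (rule Sum_partition) auto
  also have "\<dots> = Sum (\<lambda>a. Sum (\<lambda>b. g (a, b)) (B a)) A"
  proof (rule Sum_cong)
    fix a show "Sum g (Pair a ` B a) = Sum (\<lambda>b. g (a, b)) (B a)"
      by (subst Sum_reindex[of "Pair a" "B a"]) (auto simp: bij_betw_def inj_on_def comp_def)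
  qed
  finally show ?thesis .
qed

lemma Sum_fibres:
  assumes "f ` X \<subseteq> J"
  shows "Sum g X = Sum (\<lambda>j. Sum g {x\<in>X. f x = j}) J"
proof -
  have "X = (\<Union>j\<in>J. {x\<in>X. f x = j})" using assms by auto
  then have "Sum g X = Sum g (\<Union>j\<in>J. {x\<in>X. f x = j})" by simp
  also have "\<dots> = Sum (\<lambda>j. Sum g {x\<in>X. f x = j}) J"
    by (rule Sum_partition) auto
  finally show ?thesis .
qed

end



context sumop begin
lemma csum_Sum: "csum sm f J = Sum f J"
  unfolding csum_def
  by (rule Sum_codec) (auto simp: inj_on_def dest: fun_cong)
end

sublocale cssp \<subseteq> S: sumop ssum
  by unfold_locales (auto intro: ssum_cong simp: ssum_empty ssum_single ssum_pair ssum_partition)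

sublocale cssp \<subseteq> V: sumop vsum
  by unfold_locales (auto intro: vsum_cong simp: vsum_empty vsum_single vsum_pair vsum_partition)

definition cons0 :: "'x \<Rightarrow> (nat \<Rightarrow> 'x) \<Rightarrow> nat \<Rightarrow> 'x" where
  "cons0 s x k = (if k = 0 then s else x (k - 1))"

lemma cons0_0[simp]: "cons0 s x 0 = s" and cons0_Suc[simp]: "cons0 s x (Suc k) = x k"
  by (simp_all add: cons0_def)

lemma prod_list_zero: "(0::'a::semiring_1) \<in> set xs \<Longrightarrow> prod_list xs = 0"
  by (induction xs) auto

context cssp begin

lemma S_distl: "S.Sum (\<lambda>i. a * f i) I = a * S.Sum f I"
  unfolding S.Sum_def by (rule ssum_distl)

lemma S_distr: "S.Sum (\<lambda>i. f i * a) I = S.Sum f I * a"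
  unfolding S.Sum_def by (rule ssum_distr)

lemma V_smult_left: "V.Sum (\<lambda>i. smult (f i) v) I = smult (S.Sum f I) v"
  unfolding S.Sum_def V.Sum_def by (rule vsum_smult_left)

lemma V_smult_right: "V.Sum (\<lambda>i. smult a (g i)) I = smult a (V.Sum g I)"
  unfolding V.Sum_def by (rule vsum_smult_right)

lemma smult_sum_left: "smult (sum f K) v = (\<Sum>k\<in>K. smult (f k) v)"
  by (induction K rule: infinite_finite_induct) (auto simp: smult_zero_left smult_add_left)

lemma smult_sum_right: "smult a (sum g K) = (\<Sum>k\<in>K. smult a (g k))"
  by (induction K rule: infinite_finite_induct) (auto simp: smult_zero_right smult_add_right)

lemma iprod_split: "iprod s = smult (prod_list (map s [0..<t])) (iprod (\<lambda>j. s (j + t)))"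
proof (induction t arbitrary: s)
  case 0
  then show ?case by (simp add: smult_one)
next
  case (Suc t)
  have "iprod s = smult (s 0) (iprod (\<lambda>j. s (Suc j)))" by (rule iprod_first)
  also have "iprod (\<lambda>j. s (Suc j)) = smult (prod_list (map (\<lambda>j. s (Suc j)) [0..<t])) (iprod (\<lambda>j. s (Suc (j + t))))"
    by (rule Suc.IH)
  also have "map s [0..<Suc t] = s 0 # map (\<lambda>j. s (Suc j)) [0..<t]"
    by (rule map_upt_Suc)
  ultimately show ?case by (simp add: smult_mult)
qed

lemma iprod_zero: "s k = 0 \<Longrightarrow> iprod s = 0"
  using iprod_split[of s "Suc k"] by (simp add: prod_list_zero smult_zero_left)

end

locale pd = cssp ssum vsum smult iprod
  for ssum :: "(idx \<Rightarrow> 's::semiring_1) \<Rightarrow> idx set \<Rightarrow> 's"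
    and vsum :: "(idx \<Rightarrow> 'v::comm_monoid_add) \<Rightarrow> idx set \<Rightarrow> 'v"
    and smult :: "'s \<Rightarrow> 'v \<Rightarrow> 'v"
    and iprod :: "(nat \<Rightarrow> 's) \<Rightarrow> 'v" +
  fixes M :: "'a::countable list \<Rightarrow> 'a list \<Rightarrow> ('n::finite, 's) block"
  assumes pd: "pushdown_transition_matrix M"
begin

lemma M_cons: "M (q # \<tau>) (\<pi> @ \<tau>) = M [q] \<pi>"
  using pd unfolding pushdown_transition_matrix_def by blast

lemma M_nil: "M [] \<rho> = zero_block"
  using pd unfolding pushdown_transition_matrix_def by blast

lemma M_shape: "M (q # \<tau>) \<rho> \<noteq> zero_block \<Longrightarrow> \<exists>\<pi>. \<rho> = \<pi> @ \<tau>"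
  using pd unfolding pushdown_transition_matrix_def by blast

lemma M_fin: "finite {\<pi>. M [p] \<pi> \<noteq> zero_block}"
  using pd unfolding pushdown_transition_matrix_def by blast

lemma M_lift: "\<tau> \<noteq> [] \<Longrightarrow> M (\<tau> @ \<sigma>) (\<tau>' @ \<sigma>) = M \<tau> \<tau>'"
proof -
  assume "\<tau> \<noteq> []"
  then obtain q \<tau>1 where t: "\<tau> = q # \<tau>1" by (cases \<tau>) auto
  show ?thesis
  proof (cases "\<exists>\<pi>. \<tau>' = \<pi> @ \<tau>1")
    case True
    then obtain \<pi> where "\<tau>' = \<pi> @ \<tau>1" by blast
    then show ?thesis using M_cons[of q "\<tau>1 @ \<sigma>" \<pi>] M_cons[of q \<tau>1 \<pi>] t by simp
  next
    case False
    then have 1: "M \<tau> \<tau>' = zero_block" using M_shape t by blast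
    have "M (q # (\<tau>1 @ \<sigma>)) (\<tau>' @ \<sigma>) = zero_block"
    proof (rule ccontr)
      assume "M (q # (\<tau>1 @ \<sigma>)) (\<tau>' @ \<sigma>) \<noteq> zero_block"
      then obtain \<pi> where "\<tau>' @ \<sigma> = \<pi> @ \<tau>1 @ \<sigma>" using M_shape by blast
      then have "\<tau>' = \<pi> @ \<tau>1" by simp
      then show False using False by blast
    qed
    then show ?thesis using 1 t by simp
  qed
qed

definition W :: "('a list \<times> 'n) \<Rightarrow> ('a list \<times> 'n) \<Rightarrow> 's" where
  "W s t = M (fst s) (fst t) (snd s) (snd t)"

definition wseq :: "('a list \<times> 'n) \<Rightarrow> (nat \<Rightarrow> 'a list \<times> 'n) \<Rightarrow> nat \<Rightarrow> 's" where
  "wseq s0 x k = W (cons0 s0 x k) (x k)"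

definition Om :: "('a list \<times> 'n) \<Rightarrow> 'v" where
  "Om s0 = V.Sum (\<lambda>x. iprod (wseq s0 x)) UNIV"

lemma W_nil: "W ([], a) t = 0"
  by (simp add: W_def M_nil zero_block_def)

lemma wseq_Suc: "wseq s0 x (Suc k) = wseq (x 0) (\<lambda>j. x (Suc j)) k"
  by (cases k) (simp_all add: wseq_def)

lemma Momega_Om: "Momega vsum iprod M \<pi> i = Om (\<pi>, i)"
proof -
  have e: "(\<lambda>x. iprod (\<lambda>k. case (if k = 0 then (\<pi>, i) else x (k - 1)) of (\<rho>, a) \<Rightarrow>
                       (case x k of (\<sigma>, b) \<Rightarrow> M \<rho> \<sigma> a b))) = (\<lambda>x. iprod (wseq (\<pi>, i) x))"
    by (intro ext arg_cong[where f = iprod]) (simp add: wseq_def W_def cons0_def split: prod.splits)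
  show ?thesis
    unfolding Momega_def vsum_seq_def Om_def e
    by (rule V.Sum_codec) (auto simp: inj_on_def fun_eq_iff)
qed

lemma Om_first: "Om s0 = V.Sum (\<lambda>s1. smult (W s0 s1) (Om s1)) UNIV"
proof -
  let ?F = "\<lambda>x. iprod (wseq s0 x)"
  have "Om s0 = V.Sum (\<lambda>s1. V.Sum ?F {x\<in>UNIV. x 0 = s1}) UNIV"
    unfolding Om_def by (rule V.Sum_fibres) auto
  also have "\<dots> = V.Sum (\<lambda>s1. smult (W s0 s1) (Om s1)) UNIV"
  proof (rule V.Sum_cong)
    fix s1 :: "'a list \<times> 'n"
    have b: "bij_betw (cons0 s1) UNIV {x\<in>UNIV. x 0 = s1}"
    proof (rule bij_betw_byWitness[where f' = "\<lambda>x j. x (Suc j)"])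
      show "\<forall>a\<in>UNIV. (\<lambda>j. cons0 s1 a (Suc j)) = a" by simp
      show "\<forall>a'\<in>{x \<in> UNIV. x 0 = s1}. cons0 s1 (\<lambda>j. a' (Suc j)) = a'"
        by (auto simp: cons0_def fun_eq_iff)
    qed auto
    have "V.Sum ?F {x\<in>UNIV. x 0 = s1} = V.Sum (?F \<circ> cons0 s1) UNIV"
      by (rule V.Sum_reindex[OF b])
    also have "\<dots> = V.Sum (\<lambda>y. smult (W s0 s1) (iprod (wseq s1 y))) UNIV"
    proof (rule V.Sum_cong)
      fix y
      have "iprod (wseq s0 (cons0 s1 y)) = smult (wseq s0 (cons0 s1 y) 0) (iprod (\<lambda>j. wseq s0 (cons0 s1 y) (Suc j)))"
        by (rule iprod_first)
      also have "(\<lambda>j. wseq s0 (cons0 s1 y) (Suc j)) = wseq s1 y"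
        by (auto simp: wseq_Suc fun_eq_iff)
      finally have "iprod (wseq s0 (cons0 s1 y)) = smult (wseq s0 (cons0 s1 y) 0) (iprod (wseq s1 y))" .
      moreover have "wseq s0 (cons0 s1 y) 0 = W s0 s1" by (simp add: wseq_def)
      ultimately show "(?F \<circ> cons0 s1) y = smult (W s0 s1) (iprod (wseq s1 y))"
        by simp
    qed
    also have "\<dots> = smult (W s0 s1) (Om s1)"
      unfolding Om_def by (rule V_smult_right)
    finally show "V.Sum ?F {x\<in>UNIV. x 0 = s1} = smult (W s0 s1) (Om s1)" .
  qed
  finally show ?thesis .
qed

lemma Om_nil: "Om ([], i) = 0"
  unfolding Om_def
  by (rule V.Sum_zero') (rule iprod_zero[of _ 0], simp add: wseq_def W_nil)

end



context pd begin

primrec fw :: "('a list \<times> 'n) \<Rightarrow> ('a list \<times> 'n) list \<Rightarrow> 's" where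
  "fw s [] = 1"
| "fw s (t # ts) = W s t * fw t ts"

lemma mpow_paths:
  "mpow ssum m M \<pi> \<pi>' i j = S.Sum (fw (\<pi>, i)) {ys. length ys = m \<and> last ((\<pi>, i) # ys) = (\<pi>', j)}"
proof (induction m arbitrary: \<pi> i)
  case 0
  show ?case
  proof (cases "(\<pi>, i) = (\<pi>', j)")
    case True
    then have "{ys. length ys = 0 \<and> last ((\<pi>, i) # ys) = (\<pi>', j)} = {[]}" by auto
    then show ?thesis using True by (simp add: one_block_def)
  next
    case False
    then have "{ys. length ys = 0 \<and> last ((\<pi>, i) # ys) = (\<pi>', j)} = {}" by auto
    then show ?thesis using False by (auto simp: one_block_def zero_block_def)
  qed
next
  case (Suc m)
  let ?P = "\<lambda>s1. {ys. length ys = m \<and> last (s1 # ys) = (\<pi>', j)}"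
  have "mpow ssum (Suc m) M \<pi> \<pi>' i j = S.Sum (\<lambda>(\<rho>, k). M \<pi> \<rho> i k * mpow ssum m M \<rho> \<pi>' k j) UNIV"
    by (simp add: S.csum_Sum)
  also have "\<dots> = S.Sum (\<lambda>s1. S.Sum (\<lambda>zs. W (\<pi>, i) s1 * fw s1 zs) (?P s1)) UNIV"
    by (rule S.Sum_cong) (auto simp: Suc.IH S_distl W_def)
  also have "\<dots> = S.Sum (\<lambda>s1. S.Sum (fw (\<pi>, i)) ((#) s1 ` ?P s1)) UNIV"
  proof (rule S.Sum_cong)
    fix s1 :: "'a list \<times> 'n"
    have "bij_betw ((#) s1) (?P s1) ((#) s1 ` ?P s1)" by (auto simp: bij_betw_def)
    then show "S.Sum (\<lambda>zs. W (\<pi>, i) s1 * fw s1 zs) (?P s1) = S.Sum (fw (\<pi>, i)) ((#) s1 ` ?P s1)"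
      by (subst S.Sum_reindex) (auto simp: comp_def)
  qed
  also have "\<dots> = S.Sum (fw (\<pi>, i)) (\<Union>s1\<in>UNIV. (#) s1 ` ?P s1)"
    by (rule S.Sum_partition[symmetric]) auto
  also have "(\<Union>s1\<in>UNIV. (#) s1 ` ?P s1) = {ys. length ys = Suc m \<and> last ((\<pi>, i) # ys) = (\<pi>', j)}"
  proof -
    have "ys \<in> (\<Union>s1\<in>UNIV. (#) s1 ` ?P s1)" if "length ys = Suc m" "last ((\<pi>, i) # ys) = (\<pi>', j)" for ys
    proof (cases ys)
      case Nil
      then show ?thesis using that by simp
    next
      case (Cons s1 zs)
      then have "zs \<in> ?P s1" using that by auto
      then show ?thesis using Cons by blast
    qed
    moreover have "(\<Union>s1\<in>UNIV. (#) s1 ` ?P s1) \<subseteq> {ys. length ys = Suc m \<and> last ((\<pi>, i) # ys) = (\<pi>', j)}"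
      by auto
    ultimately show ?thesis by blast
  qed
  finally show ?case .
qed

definition lift :: "'a list \<Rightarrow> ('a list \<times> 'n) \<Rightarrow> ('a list \<times> 'n)" where
  "lift \<sigma> s = (fst s @ \<sigma>, snd s)"

definition unlift :: "'a list \<Rightarrow> ('a list \<times> 'n) \<Rightarrow> ('a list \<times> 'n)" where
  "unlift \<sigma> s = (take (length (fst s) - length \<sigma>) (fst s), snd s)"

definition ab :: "'a list \<Rightarrow> 'a list \<Rightarrow> bool" where
  "ab \<sigma> \<tau> \<longleftrightarrow> (\<exists>\<tau>'. \<tau>' \<noteq> [] \<and> \<tau> = \<tau>' @ \<sigma>)"

lemma W_lift: "fst s \<noteq> [] \<Longrightarrow> W (lift \<sigma> s) (lift \<sigma> t) = W s t"
  by (simp add: W_def lift_def M_lift)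

lemma unlift_lift[simp]: "unlift \<sigma> (lift \<sigma> s) = s"
  by (simp add: lift_def unlift_def)

lemma lift_unlift: "fst s = \<tau>' @ \<sigma> \<Longrightarrow> lift \<sigma> (unlift \<sigma> s) = s"
  by (cases s) (simp add: lift_def unlift_def)

lemma fst_unlift: "fst s = \<tau>' @ \<sigma> \<Longrightarrow> fst (unlift \<sigma> s) = \<tau>'"
  by (simp add: unlift_def)

lemma ab_not_self: "\<not> ab \<sigma> \<sigma>"
  by (auto simp: ab_def)

lemma fw_lift:
  "fst s \<noteq> [] \<Longrightarrow> (\<forall>u\<in>set (butlast ys). fst u \<noteq> []) \<Longrightarrow> fw (lift \<sigma> s) (map (lift \<sigma>) ys) = fw s ys"
proof (induction ys arbitrary: s)
  case Nil
  then show ?case by simp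
next
  case (Cons t ts)
  show ?case
  proof (cases "ts = []")
    case True
    then show ?thesis using Cons.prems by (simp add: W_lift)
  next
    case False
    then have "fst t \<noteq> []" "\<forall>u\<in>set (butlast ts). fst u \<noteq> []" using Cons.prems by auto
    then show ?thesis using Cons by (simp add: W_lift)
  qed
qed

lemma fw_zero: "u \<in> set (butlast ys) \<Longrightarrow> fst u = [] \<Longrightarrow> fw s ys = 0"
proof (induction ys arbitrary: s)
  case Nil
  then show ?case by simp
next
  case (Cons t ts)
  show ?case
  proof (cases "ts = []")
    case True
    then show ?thesis using Cons.prems by simp
  next
    case False
    then obtain t' ts' where ts: "ts = t' # ts'" by (cases ts) auto
    show ?thesis
    proof (cases "u = t")
      case True
      then have "W t t' = 0" using Cons.prems W_nil[of "snd t" t'] by (cases t) auto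
      then show ?thesis by (simp add: ts)
    next
      case False
      then have "u \<in> set (butlast ts)" using Cons.prems \<open>ts \<noteq> []\<close> by auto
      then show ?thesis using Cons by simp
    qed
  qed
qed

lemma prod_wseq: "prod_list (map (wseq s0 x) [0..<t]) = fw s0 (map x [0..<t])"
proof (induction t arbitrary: s0 x)
  case 0
  then show ?case by simp
next
  case (Suc t)
  have "prod_list (map (wseq s0 x) [0..<Suc t]) = wseq s0 x 0 * prod_list (map (wseq (x 0) (\<lambda>j. x (Suc j))) [0..<t])"
    by (simp only: map_upt_Suc wseq_Suc prod_list.Cons)
  also have "\<dots> = W s0 (x 0) * fw (x 0) (map (\<lambda>j. x (Suc j)) [0..<t])"
    by (simp only: Suc.IH) (simp add: wseq_def)
  also have "\<dots> = fw s0 (map x [0..<Suc t])"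
    by (simp only: map_upt_Suc fw.simps)
  finally show ?case .
qed

end



context pd begin

lemma ab_lift_unlift: "ab \<sigma> (fst s) \<Longrightarrow> lift \<sigma> (unlift \<sigma> s) = s"
  by (auto simp: ab_def intro: lift_unlift)

lemma ab_fst_unlift: "ab \<sigma> (fst s) \<Longrightarrow> fst (unlift \<sigma> s) \<noteq> []"
  by (auto simp: ab_def unlift_def)

lemma ab_lift: "fst s \<noteq> [] \<Longrightarrow> ab \<sigma> (fst (lift \<sigma> s))"
  unfolding ab_def lift_def by auto

lemma wseq_zero_R:
  assumes notN: "\<not> (\<forall>k. ab \<sigma> (fst (x k)))"
    and notP: "\<not> (\<exists>t. fst (x t) = \<sigma> \<and> (\<forall>j<t. ab \<sigma> (fst (x j))))"
  shows "iprod (wseq (p # \<sigma>, i) x) = 0"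
proof -
  obtain k where k: "\<not> ab \<sigma> (fst (x k))" "\<forall>j<k. ab \<sigma> (fst (x j))"
    using notN exists_least_iff[of "\<lambda>k. \<not> ab \<sigma> (fst (x k))"] by auto
  have ne: "fst (x k) \<noteq> \<sigma>" using notP k(2) by blast
  have "ab \<sigma> (fst (cons0 (p # \<sigma>, i) x k))"
  proof (cases k)
    case 0
    then show ?thesis by (auto simp: ab_def intro!: exI[of _ "[p]"])
  next
    case (Suc k')
    then show ?thesis using k(2) by simp
  qed
  then obtain q \<tau>1 where st: "fst (cons0 (p # \<sigma>, i) x k) = q # \<tau>1 @ \<sigma>"
    by (auto simp: ab_def neq_Nil_conv)
  have "M (q # \<tau>1 @ \<sigma>) (fst (x k)) = zero_block"
  proof (rule ccontr)
    assume "M (q # \<tau>1 @ \<sigma>) (fst (x k)) \<noteq> zero_block"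
    then obtain \<pi> where e: "fst (x k) = \<pi> @ \<tau>1 @ \<sigma>" using M_shape by blast
    show False
    proof (cases "\<pi> @ \<tau>1 = []")
      case True
      then show False using e ne by simp
    next
      case False
      then have "ab \<sigma> (fst (x k))" using e unfolding ab_def by (intro exI[of _ "\<pi> @ \<tau>1"]) simp
      then show False using k(1) by simp
    qed
  qed
  then have "wseq (p # \<sigma>, i) x k = 0" by (simp add: wseq_def W_def st zero_block_def)
  then show ?thesis by (rule iprod_zero)
qed

lemma Sum_N: "V.Sum (\<lambda>x. iprod (wseq (p # \<sigma>, i) x)) {x. \<forall>k. ab \<sigma> (fst (x k))} = Om ([p], i)"
proof -
  let ?F = "\<lambda>x. iprod (wseq (p # \<sigma>, i) x)"
  let ?Nz = "{y :: nat \<Rightarrow> 'a list \<times> 'n. \<forall>k. fst (y k) \<noteq> []}"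
  let ?N = "{x :: nat \<Rightarrow> 'a list \<times> 'n. \<forall>k. ab \<sigma> (fst (x k))}"
  have b: "bij_betw (\<lambda>y. lift \<sigma> \<circ> y) ?Nz ?N"
  proof (rule bij_betw_byWitness[where f' = "\<lambda>x. unlift \<sigma> \<circ> x"])
    show "\<forall>a\<in>?Nz. unlift \<sigma> \<circ> (lift \<sigma> \<circ> a) = a" by (auto simp: fun_eq_iff)
    show "\<forall>a'\<in>?N. lift \<sigma> \<circ> (unlift \<sigma> \<circ> a') = a'" by (auto simp: fun_eq_iff ab_lift_unlift)
    show "(\<lambda>y. lift \<sigma> \<circ> y) ` ?Nz \<subseteq> ?N"
    proof
      fix x assume "x \<in> (\<lambda>y. lift \<sigma> \<circ> y) ` ?Nz"
      then obtain y where y: "y \<in> ?Nz" "x = lift \<sigma> \<circ> y" by blast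
      show "x \<in> ?N"
      proof (simp, intro allI)
        fix k
        have "fst (y k) \<noteq> []" using y by simp
        then show "ab \<sigma> (fst (x k))" using y ab_lift by simp
      qed
    qed
    show "(\<lambda>x. unlift \<sigma> \<circ> x) ` ?N \<subseteq> ?Nz" by (simp add: image_subset_iff ab_fst_unlift)
  qed
  have "V.Sum ?F ?N = V.Sum (?F \<circ> (\<lambda>y. lift \<sigma> \<circ> y)) ?Nz" by (rule V.Sum_reindex[OF b])
  also have "\<dots> = V.Sum (\<lambda>y. iprod (wseq ([p], i) y)) ?Nz"
  proof (rule V.Sum_cong)
    fix y assume y: "y \<in> ?Nz"
    have "wseq (p # \<sigma>, i) (lift \<sigma> \<circ> y) k = wseq ([p], i) y k" for k
    proof -
      have c: "cons0 (p # \<sigma>, i) (lift \<sigma> \<circ> y) k = lift \<sigma> (cons0 ([p], i) y k)"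
        by (cases k) (simp_all add: lift_def)
      have "fst (cons0 ([p], i) y k) \<noteq> []" using y by (cases k) auto
      then show ?thesis by (simp add: wseq_def c W_lift)
    qed
    then have "wseq (p # \<sigma>, i) (lift \<sigma> \<circ> y) = wseq ([p], i) y" by (rule ext)
    then show "(?F \<circ> (\<lambda>y. lift \<sigma> \<circ> y)) y = iprod (wseq ([p], i) y)" by simp
  qed
  also have "\<dots> = Om ([p], i)"
  proof -
    have "V.Sum (\<lambda>y. iprod (wseq ([p], i) y)) UNIV = V.Sum (\<lambda>y. iprod (wseq ([p], i) y)) (UNIV \<inter> ?Nz)"
    proof (rule V.Sum_restrict)
      fix y :: "nat \<Rightarrow> 'a list \<times> 'n" assume "y \<notin> ?Nz"
      then obtain k where "fst (y k) = []" by auto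
      then have "wseq ([p], i) y (Suc k) = 0" by (cases "y k") (simp add: wseq_def W_nil)
      then show "iprod (wseq ([p], i) y) = 0" by (rule iprod_zero)
    qed
    then show ?thesis by (simp add: Om_def)
  qed
  finally show ?thesis .
qed


lemma Sum_Pt:
  "V.Sum (\<lambda>x. iprod (wseq (p # \<sigma>, i) x)) {x. x t = (\<sigma>, k) \<and> (\<forall>j<t. ab \<sigma> (fst (x j)))}
   = smult (mpow ssum (Suc t) M [p] [] i k) (Om (\<sigma>, k))"
proof -
  let ?F = "\<lambda>x. iprod (wseq (p # \<sigma>, i) x)"
  let ?FP = "{ys :: ('a list \<times> 'n) list. length ys = Suc t \<and> last ys = ([], k) \<and> (\<forall>u\<in>set (butlast ys). fst u \<noteq> [])}"
  let ?Pt = "{x :: nat \<Rightarrow> 'a list \<times> 'n. x t = (\<sigma>, k) \<and> (\<forall>j<t. ab \<sigma> (fst (x j)))}"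
  define G where "G = (\<lambda>(ys :: ('a list \<times> 'n) list, z :: nat \<Rightarrow> 'a list \<times> 'n).
      (\<lambda>j. if j < Suc t then lift \<sigma> (ys ! j) else z (j - Suc t)))"
  define G' where "G' = (\<lambda>x :: nat \<Rightarrow> 'a list \<times> 'n. (map (unlift \<sigma> \<circ> x) [0..<Suc t], \<lambda>j. x (j + Suc t)))"
  have G_simp: "G (ys, z) j = (if j < Suc t then lift \<sigma> (ys ! j) else z (j - Suc t))" for ys z j
    by (simp add: G_def)
  have FP_nth: "fst (ys ! j) \<noteq> []" if "ys \<in> ?FP" "j < t" for ys j
  proof -
    have "butlast ys ! j = ys ! j" using that by (simp add: nth_butlast)
    moreover have "butlast ys ! j \<in> set (butlast ys)" using that by (intro nth_mem) simp
    ultimately show ?thesis using that by auto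
  qed
  have FP_last: "ys ! t = ([], k)" if "ys \<in> ?FP" for ys
  proof -
    have ne: "ys \<noteq> []" using that by auto
    have "last ys = ys ! t" using last_conv_nth[OF ne] that by simp
    then show ?thesis using that by simp
  qed
  have b: "bij_betw G (?FP \<times> UNIV) ?Pt"
  proof (rule bij_betw_byWitness[where f' = G'])
    show "\<forall>a\<in>?FP \<times> UNIV. G' (G a) = a"
    proof
      fix a assume "a \<in> ?FP \<times> (UNIV :: (nat \<Rightarrow> 'a list \<times> 'n) set)"
      then obtain ys z where a: "a = (ys, z)" and ys: "ys \<in> ?FP" by blast
      have "map (unlift \<sigma> \<circ> G (ys, z)) [0..<Suc t] = ys"
        using ys by (intro nth_equalityI) (auto simp: G_simp simp del: upt_Suc)
      moreover have "(\<lambda>j. G (ys, z) (j + Suc t)) = z" by (auto simp: G_simp)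
      ultimately show "G' (G a) = a" by (simp add: G'_def a)
    qed
    show "\<forall>a'\<in>?Pt. G (G' a') = a'"
    proof
      fix x assume x: "x \<in> ?Pt"
      show "G (G' x) = x"
      proof
        fix j
        show "G (G' x) j = x j"
        proof (cases "j < Suc t")
          case True
          then have "G (G' x) j = lift \<sigma> (unlift \<sigma> (x j))"
            by (simp add: G'_def G_def nth_map_upt del: upt_Suc)
          also have "\<dots> = x j"
          proof (cases "j < t")
            case True
            then show ?thesis using x by (simp add: ab_lift_unlift)
          next
            case False
            then have "j = t" using \<open>j < Suc t\<close> by simp
            then show ?thesis using x lift_unlift[of "x j" "[]" \<sigma>] by simp
          qed
          finally show ?thesis .
        next
          case False
          then show ?thesis by (simp add: G'_def G_def)
        qed
      qed
    qed
    show "G ` (?FP \<times> UNIV) \<subseteq> ?Pt"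
    proof
      fix x assume "x \<in> G ` (?FP \<times> UNIV)"
      then obtain ys z where xe: "x = G (ys, z)" and ys: "ys \<in> ?FP" by blast
      have "G (ys, z) t = (\<sigma>, k)" using FP_last[OF ys] by (simp add: G_simp lift_def)
      moreover have "ab \<sigma> (fst (G (ys, z) j))" if "j < t" for j
        using FP_nth[OF ys that] that by (simp add: G_simp ab_lift)
      ultimately show "x \<in> ?Pt" by (simp add: xe)
    qed
    show "G' ` ?Pt \<subseteq> ?FP \<times> UNIV"
    proof
      fix y assume "y \<in> G' ` ?Pt"
      then obtain x where ye: "y = G' x" and x: "x \<in> ?Pt" by blast
      have l: "length (map (unlift \<sigma> \<circ> x) [0..<Suc t]) = Suc t" by simp
      have "last (map (unlift \<sigma> \<circ> x) [0..<Suc t]) = ([], k)"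
        using x by (simp add: unlift_def)
      moreover have "fst u \<noteq> []" if "u \<in> set (butlast (map (unlift \<sigma> \<circ> x) [0..<Suc t]))" for u
      proof -
        have "butlast (map (unlift \<sigma> \<circ> x) [0..<Suc t]) = map (unlift \<sigma> \<circ> x) [0..<t]"
          by (simp add: map_butlast[symmetric])
        then have "u \<in> set (map (unlift \<sigma> \<circ> x) [0..<t])" using that by metis
        then obtain j where "j < t" "u = unlift \<sigma> (x j)" by auto
        then show ?thesis using x ab_fst_unlift by auto
      qed
      ultimately show "y \<in> ?FP \<times> UNIV" by (simp add: ye G'_def del: upt_Suc)
    qed
  qed
  have wt: "?F (G (ys, z)) = smult (fw ([p], i) ys) (iprod (wseq (\<sigma>, k) z))" if ys: "ys \<in> ?FP" for ys z
  proof -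
    let ?x = "G (ys, z)"
    have "?F ?x = smult (prod_list (map (wseq (p # \<sigma>, i) ?x) [0..<Suc t])) (iprod (\<lambda>j. wseq (p # \<sigma>, i) ?x (j + Suc t)))"
      by (rule iprod_split)
    also have "prod_list (map (wseq (p # \<sigma>, i) ?x) [0..<Suc t]) = fw (p # \<sigma>, i) (map ?x [0..<Suc t])"
      by (rule prod_wseq)
    also have "map ?x [0..<Suc t] = map (lift \<sigma>) ys"
      using ys by (intro nth_equalityI) (auto simp: G_simp simp del: upt_Suc)
    also have "fw (p # \<sigma>, i) (map (lift \<sigma>) ys) = fw ([p], i) ys"
      using fw_lift[of "([p], i)" ys \<sigma>] ys by (simp add: lift_def)
    also have "(\<lambda>j. wseq (p # \<sigma>, i) ?x (j + Suc t)) = wseq (\<sigma>, k) z"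
    proof
      fix j
      have "cons0 (p # \<sigma>, i) ?x (j + Suc t) = ?x (j + t)" by simp
      also have "\<dots> = cons0 (\<sigma>, k) z j"
        using FP_last[OF ys] by (cases j) (auto simp: G_simp lift_def)
      finally show "wseq (p # \<sigma>, i) ?x (j + Suc t) = wseq (\<sigma>, k) z j"
        by (simp add: wseq_def G_simp)
    qed
    finally show ?thesis .
  qed
  have "V.Sum ?F ?Pt = V.Sum (?F \<circ> G) (?FP \<times> UNIV)" by (rule V.Sum_reindex[OF b])
  also have "\<dots> = V.Sum (\<lambda>(ys, z). smult (fw ([p], i) ys) (iprod (wseq (\<sigma>, k) z))) (?FP \<times> UNIV)"
    by (rule V.Sum_cong) (auto simp: wt)
  also have "\<dots> = V.Sum (\<lambda>ys. V.Sum (\<lambda>z. smult (fw ([p], i) ys) (iprod (wseq (\<sigma>, k) z))) UNIV) ?FP"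
    by (subst V.Sum_Sigma) simp
  also have "\<dots> = V.Sum (\<lambda>ys. smult (fw ([p], i) ys) (Om (\<sigma>, k))) ?FP"
    by (simp add: V_smult_right Om_def)
  also have "\<dots> = smult (S.Sum (fw ([p], i)) ?FP) (Om (\<sigma>, k))"
    by (rule V_smult_left)
  also have "S.Sum (fw ([p], i)) ?FP = mpow ssum (Suc t) M [p] [] i k"
  proof -
    let ?X = "{ys. length ys = Suc t \<and> last (([p], i) # ys) = ([], k)}"
    let ?B = "{ys :: ('a list \<times> 'n) list. \<forall>u\<in>set (butlast ys). fst u \<noteq> []}"
    have "mpow ssum (Suc t) M [p] [] i k = S.Sum (fw ([p], i)) ?X" by (rule mpow_paths)
    also have "\<dots> = S.Sum (fw ([p], i)) (?X \<inter> ?B)"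
      by (rule S.Sum_restrict) (auto intro: fw_zero)
    also have "?X \<inter> ?B = ?FP" by auto
    finally show ?thesis by simp
  qed
  finally show ?thesis .
qed


lemma mstar_Suc: "mstar ssum M [p] [] i k = S.Sum (\<lambda>t. mpow ssum (Suc t) M [p] [] i k) UNIV"
proof -
  have U: "(UNIV :: nat set) = insert 0 (range Suc)" by (auto intro: nat.exhaust)
  have "mstar ssum M [p] [] i k = S.Sum (\<lambda>m. mpow ssum m M [p] [] i k) UNIV"
    by (simp add: mstar_def S.csum_Sum)
  also have "\<dots> = mpow ssum 0 M [p] [] i k + S.Sum (\<lambda>m. mpow ssum m M [p] [] i k) (range Suc)"
    by (subst U) (rule S.Sum_insert, simp)
  also have "mpow ssum 0 M [p] [] i k = 0" by (simp add: zero_block_def)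
  also have "S.Sum (\<lambda>m. mpow ssum m M [p] [] i k) (range Suc) = S.Sum (\<lambda>t. mpow ssum (Suc t) M [p] [] i k) UNIV"
    by (subst S.Sum_reindex[of Suc UNIV]) (auto simp: bij_betw_def comp_def)
  finally show ?thesis by simp
qed

lemma Om_cons: "Om (p # \<sigma>, i) = Om ([p], i) + (\<Sum>k\<in>UNIV. smult (mstar ssum M [p] [] i k) (Om (\<sigma>, k)))"
proof -
  let ?F = "\<lambda>x. iprod (wseq (p # \<sigma>, i) x)"
  let ?N = "{x :: nat \<Rightarrow> 'a list \<times> 'n. \<forall>k. ab \<sigma> (fst (x k))}"
  let ?Pt = "\<lambda>(t, k). {x :: nat \<Rightarrow> 'a list \<times> 'n. x t = (\<sigma>, k) \<and> (\<forall>j<t. ab \<sigma> (fst (x j)))}"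
  let ?P = "\<Union>tk\<in>UNIV. ?Pt tk"
  let ?R = "UNIV - (?N \<union> ?P)"
  have U: "UNIV = (?N \<union> ?P) \<union> ?R" by blast
  have NP: "?N \<inter> ?P = {}"
  proof -
    have False if "x \<in> ?N" "x t = (\<sigma>, k)" for x t k
      using that ab_not_self[of \<sigma>] by (metis (mono_tags, lifting) fst_conv mem_Collect_eq)
    then show ?thesis by (auto split: prod.splits)
  qed
  have "Om (p # \<sigma>, i) = V.Sum ?F ((?N \<union> ?P) \<union> ?R)"
    unfolding Om_def by (subst U[symmetric]) (rule refl)
  also have "\<dots> = V.Sum ?F ?N + V.Sum ?F ?P + V.Sum ?F ?R"
  proof -
    have "V.Sum ?F ((?N \<union> ?P) \<union> ?R) = V.Sum ?F (?N \<union> ?P) + V.Sum ?F ?R"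
      by (rule V.Sum_Un) blast
    also have "V.Sum ?F (?N \<union> ?P) = V.Sum ?F ?N + V.Sum ?F ?P"
      by (rule V.Sum_Un[OF NP])
    finally show ?thesis .
  qed
  also have "V.Sum ?F ?R = 0"
  proof (rule V.Sum_zero')
    fix x assume x: "x \<in> ?R"
    show "?F x = 0"
    proof (rule wseq_zero_R)
      show "\<not> (\<forall>k. ab \<sigma> (fst (x k)))" using x by blast
      show "\<not> (\<exists>t. fst (x t) = \<sigma> \<and> (\<forall>j<t. ab \<sigma> (fst (x j))))"
      proof
        assume "\<exists>t. fst (x t) = \<sigma> \<and> (\<forall>j<t. ab \<sigma> (fst (x j)))"
        then obtain t where t: "fst (x t) = \<sigma>" "\<forall>j<t. ab \<sigma> (fst (x j))" by blast
        then have "x \<in> ?Pt (t, snd (x t))" by (cases "x t") auto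
        then show False using x by blast
      qed
    qed
  qed
  also have "V.Sum ?F ?N = Om ([p], i)" by (rule Sum_N)
  also have "V.Sum ?F ?P = V.Sum (\<lambda>tk. V.Sum ?F (?Pt tk)) UNIV"
  proof (rule V.Sum_partition)
    fix tk tk' :: "nat \<times> 'n" assume ne: "tk \<noteq> tk'"
    obtain t k t' k' where tk: "tk = (t, k)" "tk' = (t', k')" by (cases tk, cases tk') 
    show "?Pt tk \<inter> ?Pt tk' = {}"
    proof (rule ccontr)
      assume "?Pt tk \<inter> ?Pt tk' \<noteq> {}"
      then obtain x where x: "x t = (\<sigma>, k)" "\<forall>j<t. ab \<sigma> (fst (x j))" "x t' = (\<sigma>, k')" "\<forall>j<t'. ab \<sigma> (fst (x j))"
        using tk by auto
      show False
      proof (cases t t' rule: linorder_cases)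
        case less
        then show False using x ab_not_self by fastforce
      next
        case equal
        then show False using x ne tk by simp
      next
        case greater
        then show False using x ab_not_self by fastforce
      qed
    qed
  qed
  also have "\<dots> = V.Sum (\<lambda>(t, k). smult (mpow ssum (Suc t) M [p] [] i k) (Om (\<sigma>, k))) UNIV"
    by (rule V.Sum_cong) (auto simp: Sum_Pt)
  also have "\<dots> = V.Sum (\<lambda>(k, t). smult (mpow ssum (Suc t) M [p] [] i k) (Om (\<sigma>, k))) UNIV"
  proof -
    have "bij_betw prod.swap (UNIV :: ('n \<times> nat) set) UNIV"
      by (rule bij_betw_byWitness[where f' = prod.swap]) auto
    then show ?thesis
      by (subst V.Sum_reindex, assumption) (rule V.Sum_cong, auto simp del: mpow.simps)
  qed
  also have "\<dots> = V.Sum (\<lambda>k. V.Sum (\<lambda>t. smult (mpow ssum (Suc t) M [p] [] i k) (Om (\<sigma>, k))) UNIV) UNIV"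
    using V.Sum_Sigma[of "\<lambda>(k, t). smult (mpow ssum (Suc t) M [p] [] i k) (Om (\<sigma>, k))" UNIV "\<lambda>_. UNIV"]
    by (simp del: mpow.simps)
  also have "\<dots> = V.Sum (\<lambda>k. smult (mstar ssum M [p] [] i k) (Om (\<sigma>, k))) UNIV"
    by (simp add: V_smult_left mstar_Suc del: mpow.simps)
  also have "\<dots> = (\<Sum>k\<in>UNIV. smult (mstar ssum M [p] [] i k) (Om (\<sigma>, k)))"
    by (rule V.Sum_finite) simp
  finally show ?thesis by (simp add: add.commute add.left_commute)
qed


lemma Om_stack:
  "Om (\<pi>, i) = (\<Sum>jj<length \<pi>. \<Sum>i'\<in>UNIV.
      smult (block_prod (map (\<lambda>q. mstar ssum M [q] []) (take jj \<pi>)) i i') (Om ([\<pi> ! jj], i')))"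
proof (induction \<pi> arbitrary: i)
  case Nil
  then show ?case by (simp add: Om_nil)
next
  case (Cons p \<sigma>)
  let ?m = "\<lambda>q. mstar ssum M [q] []"
  let ?B = "\<lambda>jj. block_prod (map ?m (take jj \<sigma>))"
  let ?T = "\<lambda>jj. \<Sum>i'\<in>UNIV. smult (block_prod (map ?m (take jj (p # \<sigma>))) i i') (Om ([(p # \<sigma>) ! jj], i'))"
  have T0: "?T 0 = Om ([p], i)"
  proof -
    have "?T 0 = (\<Sum>i'\<in>UNIV. if i = i' then Om ([p], i') else 0)"
      by (intro sum.cong refl) (simp add: one_block_def smult_one smult_zero_left)
    then show ?thesis by simp
  qed
  have TS: "?T (Suc jj) = (\<Sum>k\<in>UNIV. smult (?m p i k) (\<Sum>i'\<in>UNIV. smult (?B jj k i') (Om ([\<sigma> ! jj], i'))))" for jj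
  proof -
    have "?T (Suc jj) = (\<Sum>i'\<in>UNIV. \<Sum>k\<in>UNIV. smult (?m p i k) (smult (?B jj k i') (Om ([\<sigma> ! jj], i'))))"
      by (simp add: block_mult_def smult_sum_left smult_mult)
    also have "\<dots> = (\<Sum>k\<in>UNIV. \<Sum>i'\<in>UNIV. smult (?m p i k) (smult (?B jj k i') (Om ([\<sigma> ! jj], i'))))"
      by (rule sum.swap)
    also have "\<dots> = (\<Sum>k\<in>UNIV. smult (?m p i k) (\<Sum>i'\<in>UNIV. smult (?B jj k i') (Om ([\<sigma> ! jj], i'))))"
      by (simp add: smult_sum_right)
    finally show ?thesis .
  qed
  have "(\<Sum>jj<length (p # \<sigma>). ?T jj) = ?T 0 + (\<Sum>jj<length \<sigma>. ?T (Suc jj))"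
    by (simp add: sum.lessThan_Suc_shift del: sum.lessThan_Suc)
  also have "(\<Sum>jj<length \<sigma>. ?T (Suc jj))
      = (\<Sum>jj<length \<sigma>. \<Sum>k\<in>UNIV. smult (?m p i k) (\<Sum>i'\<in>UNIV. smult (?B jj k i') (Om ([\<sigma> ! jj], i'))))"
    by (simp only: TS)
  also have "\<dots> = (\<Sum>k\<in>UNIV. \<Sum>jj<length \<sigma>. smult (?m p i k) (\<Sum>i'\<in>UNIV. smult (?B jj k i') (Om ([\<sigma> ! jj], i'))))"
    by (rule sum.swap)
  also have "\<dots> = (\<Sum>k\<in>UNIV. smult (?m p i k) (Om (\<sigma>, k)))"
    by (simp only: Cons.IH smult_sum_right)
  finally have "(\<Sum>jj<length (p # \<sigma>). ?T jj) = Om ([p], i) + (\<Sum>k\<in>UNIV. smult (?m p i k) (Om (\<sigma>, k)))"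
    by (simp only: T0)
  then show ?case by (subst Om_cons[of p \<sigma> i]) (rule sym)
qed


lemma main:
  assumes fin: "finite (UNIV :: 'a set)"
  shows "Om ([p], i) = (\<Sum>p'\<in>UNIV. \<Sum>j\<in>UNIV. smult (A_M ssum M p p' i j) (Om ([p'], j)))"
proof -
  define F where "F = {\<pi>. M [p] \<pi> \<noteq> zero_block}"
  have finF: "finite F" using M_fin F_def by simp
  define G where "G = (SIGMA \<pi>:F. {..<length \<pi>})"
  have finG: "finite G" using finF by (simp add: G_def)
  define Bp where "Bp \<pi> jj = block_prod (map (\<lambda>q. mstar ssum M [q] []) (take jj \<pi>))" for \<pi> jj
  define Q where "Q \<pi> jj j k = smult (M [p] \<pi> i k * Bp \<pi> jj k j) (Om ([\<pi> ! jj], j))" for \<pi> jj j k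
  have Mz: "\<pi> \<notin> F \<Longrightarrow> M [p] \<pi> a b = 0" for \<pi> a b by (simp add: F_def zero_block_def)
  have LHS: "Om ([p], i) = (\<Sum>(\<pi>, jj)\<in>G. \<Sum>j\<in>UNIV. \<Sum>k\<in>UNIV. Q \<pi> jj j k)"
  proof -
    have "Om ([p], i) = V.Sum (\<lambda>s1. smult (W ([p], i) s1) (Om s1)) UNIV" by (rule Om_first)
    also have "\<dots> = (\<Sum>s1\<in>UNIV \<inter> (F \<times> UNIV). smult (W ([p], i) s1) (Om s1))"
    proof (rule V.Sum_fin_support)
      show "finite (F \<times> (UNIV :: 'n set))" using finF by simp
      fix s1 :: "'a list \<times> 'n" assume "s1 \<notin> F \<times> UNIV"
      then have "fst s1 \<notin> F" by (cases s1) auto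
      then show "smult (W ([p], i) s1) (Om s1) = 0" by (simp add: W_def Mz smult_zero_left)
    qed
    also have "\<dots> = (\<Sum>\<rho>\<in>F. \<Sum>k\<in>UNIV. smult (M [p] \<rho> i k) (Om (\<rho>, k)))"
      by (simp add: sum.cartesian_product W_def case_prod_beta)
    also have "\<dots> = (\<Sum>\<rho>\<in>F. \<Sum>k\<in>UNIV. \<Sum>jj<length \<rho>. \<Sum>j\<in>UNIV. smult (M [p] \<rho> i k) (smult (Bp \<rho> jj k j) (Om ([\<rho> ! jj], j))))"
      by (intro sum.cong refl, subst Om_stack) (simp add: smult_sum_right Bp_def)
    also have "\<dots> = (\<Sum>\<rho>\<in>F. \<Sum>jj<length \<rho>. \<Sum>j\<in>UNIV. \<Sum>k\<in>UNIV. Q \<rho> jj j k)"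
    proof (intro sum.cong refl)
      fix \<rho>
      have "(\<Sum>k\<in>UNIV. \<Sum>jj<length \<rho>. \<Sum>j\<in>UNIV. smult (M [p] \<rho> i k) (smult (Bp \<rho> jj k j) (Om ([\<rho> ! jj], j))))
          = (\<Sum>jj<length \<rho>. \<Sum>k\<in>UNIV. \<Sum>j\<in>UNIV. smult (M [p] \<rho> i k) (smult (Bp \<rho> jj k j) (Om ([\<rho> ! jj], j))))"
        by (rule sum.swap)
      also have "\<dots> = (\<Sum>jj<length \<rho>. \<Sum>j\<in>UNIV. \<Sum>k\<in>UNIV. smult (M [p] \<rho> i k) (smult (Bp \<rho> jj k j) (Om ([\<rho> ! jj], j))))"
        by (rule sum.cong[OF refl]) (rule sum.swap)
      also have "\<dots> = (\<Sum>jj<length \<rho>. \<Sum>j\<in>UNIV. \<Sum>k\<in>UNIV. Q \<rho> jj j k)"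
        by (simp add: Q_def smult_mult)
      finally show "(\<Sum>k\<in>UNIV. \<Sum>jj<length \<rho>. \<Sum>j\<in>UNIV. smult (M [p] \<rho> i k) (smult (Bp \<rho> jj k j) (Om ([\<rho> ! jj], j))))
          = (\<Sum>jj<length \<rho>. \<Sum>j\<in>UNIV. \<Sum>k\<in>UNIV. Q \<rho> jj j k)" .
    qed
    also have "\<dots> = (\<Sum>(\<pi>, jj)\<in>G. \<Sum>j\<in>UNIV. \<Sum>k\<in>UNIV. Q \<pi> jj j k)"
      unfolding G_def by (rule sum.Sigma) (auto simp: finF)
    finally show ?thesis .
  qed
  have A: "A_M ssum M p p' i j = (\<Sum>x\<in>G. if fst x ! snd x = p' then (\<Sum>k\<in>UNIV. M [p] (fst x) i k * Bp (fst x) (snd x) k j) else 0)" for p' j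
  proof -
    let ?T = "{(\<pi>, jj). \<pi> \<noteq> [] \<and> jj < length \<pi> \<and> \<pi> ! jj = p'}"
    let ?f = "\<lambda>(\<pi>, jj). block_prod (M [p] \<pi> # map (\<lambda>q. mstar ssum M [q] []) (take jj \<pi>)) i j"
    have "A_M ssum M p p' i j = S.Sum ?f ?T" by (simp add: A_M_def S.csum_Sum)
    also have "\<dots> = sum ?f (?T \<inter> G)"
    proof (rule S.Sum_fin_support[OF finG])
      fix x assume x: "x \<in> ?T" "x \<notin> G"
      obtain \<pi> jj where xe: "x = (\<pi>, jj)" by (cases x)
      have "\<pi> \<notin> F" using x by (auto simp: G_def xe)
      then show "?f x = 0" by (simp add: xe block_mult_def Mz)
    qed
    also have "?T \<inter> G = {x\<in>G. fst x ! snd x = p'}" by (auto simp: G_def)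
    also have "sum ?f {x\<in>G. fst x ! snd x = p'} = (\<Sum>x\<in>G. if fst x ! snd x = p' then ?f x else 0)"
      by (rule sum.inter_filter[OF finG])
    also have "\<dots> = (\<Sum>x\<in>G. if fst x ! snd x = p' then (\<Sum>k\<in>UNIV. M [p] (fst x) i k * Bp (fst x) (snd x) k j) else 0)"
      by (intro sum.cong refl) (auto simp: block_mult_def Bp_def split: prod.splits)
    finally show ?thesis .
  qed
  have e1: "smult (A_M ssum M p p' i j) (Om ([p'], j)) = (\<Sum>x\<in>G. if fst x ! snd x = p' then (\<Sum>k\<in>UNIV. Q (fst x) (snd x) j k) else 0)" for p' j
    unfolding A smult_sum_left
    by (intro sum.cong refl) (auto simp: Q_def smult_sum_left smult_zero_left)
  have "(\<Sum>p'\<in>UNIV. \<Sum>j\<in>UNIV. smult (A_M ssum M p p' i j) (Om ([p'], j)))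
      = (\<Sum>p'\<in>UNIV. \<Sum>j\<in>UNIV. \<Sum>x\<in>G. if fst x ! snd x = p' then (\<Sum>k\<in>UNIV. Q (fst x) (snd x) j k) else 0)"
    by (simp only: e1)
  also have "\<dots> = (\<Sum>j\<in>UNIV. \<Sum>p'\<in>UNIV. \<Sum>x\<in>G. if fst x ! snd x = p' then (\<Sum>k\<in>UNIV. Q (fst x) (snd x) j k) else 0)"
    by (rule sum.swap)
  also have "\<dots> = (\<Sum>j\<in>UNIV. \<Sum>x\<in>G. \<Sum>p'\<in>UNIV. if fst x ! snd x = p' then (\<Sum>k\<in>UNIV. Q (fst x) (snd x) j k) else 0)"
    by (rule sum.cong[OF refl]) (rule sum.swap)
  also have "\<dots> = (\<Sum>x\<in>G. \<Sum>j\<in>UNIV. \<Sum>p'\<in>UNIV. if fst x ! snd x = p' then (\<Sum>k\<in>UNIV. Q (fst x) (snd x) j k) else 0)"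
    by (rule sum.swap)
  also have "\<dots> = (\<Sum>x\<in>G. \<Sum>j\<in>UNIV. \<Sum>k\<in>UNIV. Q (fst x) (snd x) j k)"
    using fin by simp
  also have "\<dots> = Om ([p], i)"
    by (simp add: LHS case_prod_beta)
  finally show ?thesis by simp
qed

end

theorem theorem4:
  fixes ssum :: "(idx \<Rightarrow> 's::semiring_1) \<Rightarrow> idx set \<Rightarrow> 's"
    and vsum :: "(idx \<Rightarrow> 'v::comm_monoid_add) \<Rightarrow> idx set \<Rightarrow> 'v"
    and smult :: "'s \<Rightarrow> 'v \<Rightarrow> 'v"
    and iprod :: "(nat \<Rightarrow> 's) \<Rightarrow> 'v"
    and M :: "'a::finite list \<Rightarrow> 'a list \<Rightarrow> ('n::finite, 's) block"
  assumes "cssp ssum vsum smult iprod"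
    and "pushdown_transition_matrix M"
  shows "\<forall>p i. Momega vsum iprod M [p] i =
           (\<Sum>p'\<in>UNIV. \<Sum>j\<in>UNIV. smult (A_M ssum M p p' i j) (Momega vsum iprod M [p'] j))"
proof -
  interpret P: pd ssum vsum smult iprod M
    by (rule pd.intro[OF assms(1)]) (simp add: pd_axioms_def assms(2))
  show ?thesis
    unfolding P.Momega_Om by (intro allI, rule P.main[OF finite_UNIV])
qed



end
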